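(* Let $R$ be a $*$-ring. Then $R$ is strongly $J$-$*$-clean if and only if (1) $R$ is strongly $*$-clean; (2) $a+a^*\in J(R)$ for every $a\in R$; and (3) $J(R)=\{x\in R\mid 1+xx^*\in U(R)\}$.
   Context: All rings are associative with identity. A $*$-ring is a ring $R$ with an involution $*$, i.e. a map $a\mapsto a^*$ with $(a+b)^*=a^*+b^*$, $(ab)^*=b^*a^*$, $(a^* )^*=a$. $U(R)$ denotes the group of units and $J(R)$ the Jacobson radical of $R$. A projection is an element $e$ with $e^2=e=e^*$. $R$ is strongly $J$-$*$-clean if every $a\in R$ can be written $a=e+u$ with $e$ a projection, $u\in J(R)$ and $ae=ea$. $R$ is strongly $*$-clean if every $a\in R$ can be written $a=e+u$ with $e$ a projection, $u\in U(R)$ and $eu=ue$. *)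

theory Defs
  imports Main
begin

definition is_involution :: "('a::ring_1 \<Rightarrow> 'a) \<Rightarrow> bool" where
  "is_involution st \<longleftrightarrow>
     (\<forall>a b. st (a + b) = st a + st b) \<and>
     (\<forall>a b. st (a * b) = st b * st a) \<and>
     (\<forall>a. st (st a) = a)"

definition units :: "'a::ring_1 set" where
  "units = {u. \<exists>v. u * v = 1 \<and> v * u = 1}"

definition left_ideal :: "'a::ring_1 set \<Rightarrow> bool" where
  "left_ideal I \<longleftrightarrow> 0 \<in> I \<and> (\<forall>x\<in>I. \<forall>y\<in>I. x - y \<in> I) \<and> (\<forall>r. \<forall>x\<in>I. r * x \<in> I)"

definition maximal_left_ideal :: "'a::ring_1 set \<Rightarrow> bool" where
  "maximal_left_ideal I \<longleftrightarrow> left_ideal I \<and> I \<noteq> UNIV \<and>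
     (\<forall>K. left_ideal K \<and> I \<subseteq> K \<longrightarrow> K = I \<or> K = UNIV)"

definition jacobson :: "'a::ring_1 set" where
  "jacobson = \<Inter> {I. maximal_left_ideal I}"

definition projection :: "('a::ring_1 \<Rightarrow> 'a) \<Rightarrow> 'a \<Rightarrow> bool" where
  "projection st e \<longleftrightarrow> e * e = e \<and> st e = e"

definition strongly_J_star_clean :: "('a::ring_1 \<Rightarrow> 'a) \<Rightarrow> bool" where
  "strongly_J_star_clean st \<longleftrightarrow>
     (\<forall>a. \<exists>e u. a = e + u \<and> projection st e \<and> u \<in> jacobson \<and> a * e = e * a)"

definition strongly_star_clean :: "('a::ring_1 \<Rightarrow> 'a) \<Rightarrow> bool" where
  "strongly_star_clean st \<longleftrightarrow>
     (\<forall>a. \<exists>e u. a = e + u \<and> projection st e \<and> u \<in> units \<and> e * u = u * e)"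

end

theory Submission
  imports Defs
begin

lemma left_ideal_one: "left_ideal I \<Longrightarrow> 1 \<in> I \<Longrightarrow> I = (UNIV :: 'a::ring_1 set)"
  unfolding left_ideal_def by (metis UNIV_eq_I mult.right_neutral)

lemma left_ideal_add: "left_ideal I \<Longrightarrow> x \<in> I \<Longrightarrow> y \<in> I \<Longrightarrow> x + (y::'a::ring_1) \<in> I"
  unfolding left_ideal_def by (metis diff_0 diff_minus_eq_add)

lemma exists_maximal:
  fixes L :: "'a::ring_1 set"
  assumes L: "left_ideal L" and n1: "1 \<notin> L"
  shows "\<exists>M. maximal_left_ideal M \<and> L \<subseteq> M"
proof -
  let ?A = "{K. left_ideal K \<and> L \<subseteq> K \<and> 1 \<notin> K}"
  have "\<exists>M\<in>?A. \<forall>X\<in>?A. M \<subseteq> X \<longrightarrow> X = M"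
  proof (rule subset_Zorn_nonempty)
    show "?A \<noteq> {}" using L n1 by blast
  next
    fix C assume Cne: "C \<noteq> {}" and ch: "subset.chain ?A C"
    have CA: "C \<subseteq> ?A" and cmp: "\<And>X Y. X \<in> C \<Longrightarrow> Y \<in> C \<Longrightarrow> X \<subseteq> Y \<or> Y \<subseteq> X"
      using ch by (auto simp: subset.chain_def)
    have "left_ideal (\<Union>C)"
      unfolding left_ideal_def
    proof (intro conjI ballI allI)
      show "0 \<in> \<Union>C" using Cne CA by (auto simp: left_ideal_def)
    next
      fix x y assume "x \<in> \<Union>C" "y \<in> \<Union>C"
      then obtain X Y where XY: "X \<in> C" "Y \<in> C" "x \<in> X" "y \<in> Y" by blast
      show "x - y \<in> \<Union>C"
      proof (cases "X \<subseteq> Y")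
        case True
        have "left_ideal Y" using CA XY by blast
        moreover have "x \<in> Y" using True XY by blast
        ultimately have "x - y \<in> Y" using XY by (auto simp: left_ideal_def)
        then show ?thesis using XY by blast
      next
        case False
        then have "Y \<subseteq> X" using cmp XY by blast
        have "left_ideal X" using CA XY by blast
        moreover have "y \<in> X" using \<open>Y \<subseteq> X\<close> XY by blast
        ultimately have "x - y \<in> X" using XY by (auto simp: left_ideal_def)
        then show ?thesis using XY by blast
      qed
    next
      fix r x assume "x \<in> \<Union>C"
      then obtain X where X: "X \<in> C" "x \<in> X" by blast
      then have "left_ideal X" using CA by blast
      then have "r * x \<in> X" using X by (auto simp: left_ideal_def)
      then show "r * x \<in> \<Union>C" using X by blast
    qed
    then show "\<Union>C \<in> ?A" using Cne CA by auto
  qed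
  then obtain M where M: "M \<in> ?A" and mx: "\<forall>X\<in>?A. M \<subseteq> X \<longrightarrow> X = M" by blast
  have "maximal_left_ideal M"
    unfolding maximal_left_ideal_def
  proof (intro conjI allI impI)
    show "left_ideal M" using M by auto
    show "M \<noteq> UNIV" using M by auto
  next
    fix K assume K: "left_ideal K \<and> M \<subseteq> K"
    show "K = M \<or> K = UNIV"
    proof (cases "1 \<in> K")
      case True then show ?thesis using K left_ideal_one by blast
    next
      case False then show ?thesis using K M mx by blast
    qed
  qed
  then show ?thesis using M by blast
qed

lemma jac_left_ideal: "left_ideal (jacobson :: 'a::ring_1 set)"
  unfolding left_ideal_def jacobson_def maximal_left_ideal_def
  by (auto simp: left_ideal_def)

lemma jac_char:
  "(x::'a::ring_1) \<in> jacobson \<longleftrightarrow> (\<forall>r. \<exists>v. v * (1 - r * x) = 1)"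
proof
  assume x: "x \<in> jacobson"
  show "\<forall>r. \<exists>v. v * (1 - r * x) = 1"
  proof (rule ccontr)
    assume "\<not> ?thesis"
    then obtain r where nr: "\<And>v. v * (1 - r * x) \<noteq> 1" by blast
    let ?L = "{y * (1 - r * x) | y. True}"
    have L: "left_ideal ?L" unfolding left_ideal_def
    proof (intro conjI ballI allI)
      show "0 \<in> ?L" by (metis (mono_tags, lifting) mem_Collect_eq mult_zero_left)
    next
      fix a b assume "a \<in> ?L" "b \<in> ?L"
      then obtain y z where "a = y * (1 - r * x)" "b = z * (1 - r * x)" by blast
      then have "a - b = (y - z) * (1 - r * x)" by (simp add: left_diff_distrib)
      then show "a - b \<in> ?L" by blast
    next
      fix s a assume "a \<in> ?L"
      then obtain y where "a = y * (1 - r * x)" by blast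
      then have "s * a = (s * y) * (1 - r * x)" by (simp add: mult.assoc)
      then show "s * a \<in> ?L" by blast
    qed
    have "1 \<notin> ?L" using nr by auto
    then obtain M where M: "maximal_left_ideal M" "?L \<subseteq> M" using exists_maximal L by blast
    have "x \<in> M" using x M(1) by (auto simp: jacobson_def)
    then have "r * x \<in> M" using M(1) by (auto simp: maximal_left_ideal_def left_ideal_def)
    moreover have "1 - r * x \<in> M"
    proof -
      have "1 * (1 - r * x) \<in> ?L" by blast
      then show ?thesis using M(2) by auto
    qed
    ultimately have "r * x + (1 - r * x) \<in> M" using left_ideal_add[of M] M(1)
      unfolding maximal_left_ideal_def by blast
    then have "1 \<in> M" by simp
    then show False using M(1) left_ideal_one by (auto simp: maximal_left_ideal_def)
  qed
next
  assume h: "\<forall>r. \<exists>v. v * (1 - r * x) = 1"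
  show "x \<in> jacobson"
    unfolding jacobson_def
  proof
    fix M :: "'a set" assume "M \<in> {I. maximal_left_ideal I}"
    then have M: "maximal_left_ideal M" by simp
    then have LM: "left_ideal M" and MU: "M \<noteq> UNIV" by (auto simp: maximal_left_ideal_def)
    show "x \<in> M"
    proof (rule ccontr)
      assume xM: "x \<notin> M"
      let ?K = "{m + r * x | m r. m \<in> M}"
      have LMd: "0 \<in> M" "\<And>a b. a \<in> M \<Longrightarrow> b \<in> M \<Longrightarrow> a - b \<in> M"
        "\<And>s a. a \<in> M \<Longrightarrow> s * a \<in> M" using LM unfolding left_ideal_def by blast+
      have LK: "left_ideal ?K" unfolding left_ideal_def
      proof (intro conjI ballI allI)
        have "0 = 0 + 0 * x" by simp
        then show "0 \<in> ?K" using LMd(1) by blast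
      next
        fix a b assume "a \<in> ?K" "b \<in> ?K"
        then obtain m r m' r' where mm: "a = m + r * x" "b = m' + r' * x" "m \<in> M" "m' \<in> M" by blast
        then have "a - b = (m - m') + (r - r') * x" by (simp add: algebra_simps)
        moreover have "m - m' \<in> M" using LMd(2) mm by blast
        ultimately show "a - b \<in> ?K" by blast
      next
        fix s a assume "a \<in> ?K"
        then obtain m r where mm: "a = m + r * x" "m \<in> M" by blast
        then have "s * a = s * m + (s * r) * x" by (simp add: algebra_simps)
        moreover have "s * m \<in> M" using LMd(3) mm by blast
        ultimately show "s * a \<in> ?K" by blast
      qed
      have "M \<subseteq> ?K"
      proof
        fix m assume "m \<in> M"
        moreover have "m = m + 0 * x" by simp
        ultimately show "m \<in> ?K" by blast
      qed
      moreover have "x \<notin> M" by (rule xM)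
      moreover have "x \<in> ?K"
      proof -
        have "x = 0 + 1 * x" by simp
        then show ?thesis using LMd(1) by blast
      qed
      ultimately have "?K \<noteq> M" by blast
      moreover have "?K = M \<or> ?K = UNIV" using M LK \<open>M \<subseteq> ?K\<close> unfolding maximal_left_ideal_def by blast
      ultimately have "?K = UNIV" by blast
      then have "1 \<in> ?K" by blast
      then obtain m r where mr: "1 = m + r * x" "m \<in> M" by blast
      then have "m = 1 - r * x" by (simp add: eq_diff_eq)
      moreover obtain v where "v * (1 - r * x) = 1" using h by blast
      ultimately have "v * m = 1" by simp
      moreover have "v * m \<in> M" using LMd(3) mr(2) by blast
      ultimately have "1 \<in> M" by simp
      then show False using LM MU left_ideal_one by blast
    qed
  qed
qed

lemma units_mult: "u \<in> units \<Longrightarrow> w \<in> units \<Longrightarrow> u * (w::'a::ring_1) \<in> units"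
  unfolding units_def
proof clarify
  fix v v' assume "u * v = 1" "v * u = 1" "w * v' = 1" "v' * w = 1"
  then show "\<exists>z. u * w * z = 1 \<and> z * (u * w) = 1"
    by (intro exI[of _ "v' * v"]) (metis mult.assoc mult_1_left)
qed

lemma jac_unit: assumes "(x::'a::ring_1) \<in> jacobson" shows "1 - r * x \<in> units"
proof -
  obtain u where u: "u * (1 - r * x) = 1" using assms jac_char by blast
  then have "u = 1 - (- u * r) * x" by (simp add: algebra_simps)
  then obtain w where w: "w * u = 1" using assms jac_char by metis
  have "w = w * (u * (1 - r * x))" using u by simp
  also have "\<dots> = 1 - r * x" using w by (metis mult.assoc mult_1_left)
  finally show ?thesis using u w unfolding units_def by auto
qed

lemma swap_unit:
  assumes "1 - a * (b::'a::ring_1) \<in> units" shows "1 - b * a \<in> units"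
proof -
  obtain v where v: "(1 - a * b) * v = 1" "v * (1 - a * b) = 1" using assms units_def by blast
  have v1: "v - a * b * v = 1" "v - v * a * b = 1" using v by (simp_all add: algebra_simps)
  let ?w = "1 + b * v * a"
  have "(1 - b * a) * ?w = 1 - b * a + b * (v - a * b * v) * a" by (simp add: algebra_simps)
  also have "\<dots> = 1" using v1 by simp
  finally have 1: "(1 - b * a) * ?w = 1" .
  have "?w * (1 - b * a) = 1 - b * a + b * (v - v * a * b) * a" by (simp add: algebra_simps)
  also have "\<dots> = 1" using v1 by simp
  finally have 2: "?w * (1 - b * a) = 1" .
  show ?thesis using 1 2 unfolding units_def by blast
qed

lemma jac_char2: "(x::'a::ring_1) \<in> jacobson \<longleftrightarrow> (\<forall>r. 1 - r * x \<in> units)"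
  using jac_unit jac_char unfolding units_def by blast

lemma jac_char3: "(x::'a::ring_1) \<in> jacobson \<longleftrightarrow> (\<forall>r. 1 - x * r \<in> units)"
  using jac_char2 swap_unit by blast

lemma jac_rmult: "(x::'a::ring_1) \<in> jacobson \<Longrightarrow> x * r \<in> jacobson"
  unfolding jac_char3 by (metis jac_char3 mult.assoc)

lemma jac_lmult: "(x::'a::ring_1) \<in> jacobson \<Longrightarrow> r * x \<in> jacobson"
  using jac_left_ideal unfolding left_ideal_def by blast

lemma jac_add: "(x::'a::ring_1) \<in> jacobson \<Longrightarrow> y \<in> jacobson \<Longrightarrow> x + y \<in> jacobson"
  using jac_left_ideal left_ideal_add by blast

lemma jac_diff: "(x::'a::ring_1) \<in> jacobson \<Longrightarrow> y \<in> jacobson \<Longrightarrow> x - y \<in> jacobson"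
  using jac_left_ideal unfolding left_ideal_def by blast

lemma jac_uminus: "(x::'a::ring_1) \<in> jacobson \<Longrightarrow> - x \<in> jacobson"
  using jac_lmult[of x "-1"] by simp

lemma unit_plus_jac:
  assumes u: "u \<in> units" and j: "(j::'a::ring_1) \<in> jacobson" shows "u + j \<in> units"
proof -
  obtain v where v: "u * v = 1" "v * u = 1" using u units_def by blast
  have "1 - (- v) * j \<in> units" using jac_unit j by blast
  then have "u * (1 - (- v) * j) \<in> units" using units_mult u by blast
  moreover have "u * (1 - (- v) * j) = u + j" using v by (simp add: algebra_simps flip: mult.assoc)
  ultimately show ?thesis by simp
qed

context
  fixes st :: "'a::ring_1 \<Rightarrow> 'a"
  assumes inv: "is_involution st"
begin

lemma st_add: "st (a + b) = st a + st b" using inv is_involution_def by blast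
lemma st_mult: "st (a * b) = st b * st a" using inv is_involution_def by blast
lemma st_st: "st (st a) = a" using inv is_involution_def by blast
lemma st_0: "st 0 = 0" using st_add[of 0 0] by simp
lemma st_minus: "st (- a) = - st a" using st_add[of a "-a"] st_0 by (simp add: eq_neg_iff_add_eq_0 add.commute)
lemma st_diff: "st (a - b) = st a - st b" using st_add[of a "-b"] st_minus by simp
lemma st_1: "st 1 = 1"
proof -
  have "y = y * st 1" for y
  proof -
    have "st (1 * st y) = st (st y) * st 1" by (rule st_mult)
    then show ?thesis by (simp add: st_st)
  qed
  from this[of 1] show ?thesis by simp
qed

lemma st_unit: "u \<in> units \<Longrightarrow> st u \<in> units"
proof -
  assume "u \<in> units"
  then obtain v where v: "u * v = 1" "v * u = 1" unfolding units_def by blast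
  have "st u * st v = 1" using st_mult[of v u] v(2) st_1 by simp
  moreover have "st v * st u = 1" using st_mult[of u v] v(1) st_1 by simp
  ultimately show ?thesis unfolding units_def by blast
qed

lemma st_jac: "x \<in> jacobson \<Longrightarrow> st x \<in> jacobson"
proof -
  assume x: "x \<in> jacobson"
  show ?thesis unfolding jac_char2
  proof
    fix r
    have "1 - x * st r \<in> units" using x jac_char3 by blast
    then have "st (1 - x * st r) \<in> units" by (rule st_unit)
    then show "1 - r * st x \<in> units" by (simp add: st_diff st_1 st_mult st_st)
  qed
qed

lemma proj_compl: "projection st e \<Longrightarrow> projection st (1 - e)"
proof -
  assume "projection st e"
  then have ee: "e * e = e" and se: "st e = e" unfolding projection_def by auto
  have "(1 - e) * (1 - e) = 1 - e - e + e * e" by (simp add: algebra_simps)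
  also have "\<dots> = 1 - e" using ee by simp
  finally have 1: "(1 - e) * (1 - e) = 1 - e" .
  have 2: "st (1 - e) = 1 - e" using st_diff[of 1 e] st_1 se by simp
  show ?thesis unfolding projection_def using 1 2 by blast
qed

end

lemma two_mult_jac: "(2::'a::ring_1) \<in> jacobson \<Longrightarrow> (x::'a) + x \<in> jacobson"
proof -
  assume "(2::'a) \<in> jacobson"
  then have "2 * x \<in> jacobson" by (rule jac_rmult)
  then show ?thesis by (simp only: mult_2)
qed

theorem corollary3p5:
  fixes st :: "'a::ring_1 \<Rightarrow> 'a"
  assumes inv: "is_involution st"
  shows "strongly_J_star_clean st \<longleftrightarrow>
           (strongly_star_clean st \<and>
            (\<forall>a. a + st a \<in> (jacobson :: 'a set)) \<and>
            (jacobson :: 'a set) = {x. 1 + x * st x \<in> units})"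
proof
  assume H: "strongly_J_star_clean st"
  then have H': "\<And>a. \<exists>e u. a = e + u \<and> projection st e \<and> u \<in> jacobson \<and> a * e = e * a"
    using H by (simp add: strongly_J_star_clean_def)
  obtain e j where ej: "-1 = e + j" "projection st e" "j \<in> jacobson"
    using H'[of "-1"] by blast
  have ee: "e * e = e" using ej(2) projection_def by blast
  have "(e+j)*(e+j) - (e+j) = e*e + e*j + j*e + j*j - e - j" by (simp add: algebra_simps)
  also have "\<dots> = e*j + j*e + j*j - j" using ee by simp
  finally have "(e+j)*(e+j) - (e+j) = e*j + j*e + j*j - j" .
  moreover have "(e+j)*(e+j) - (e+j) = (2::'a)" unfolding ej(1)[symmetric] by simp
  moreover have "e*j + j*e + j*j - j \<in> jacobson"
    by (intro jac_add jac_diff jac_lmult[OF ej(3)] jac_rmult[OF ej(3)] ej(3))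
  ultimately have two: "(2::'a) \<in> jacobson" by simp
  have sc: "strongly_star_clean st" unfolding strongly_star_clean_def
  proof
    fix a
    obtain e j where ej: "a = e + j" "projection st e" "j \<in> jacobson" "a * e = e * a"
      using H'[of a] by blast
    have ee: "e * e = e" using ej(2) projection_def by blast
    have "(2*e - 1) \<in> units" unfolding units_def mem_Collect_eq
      by (rule exI[of _ "2*e - 1"]) (simp add: algebra_simps ee mult_2 mult_2_right)
    then have "(2*e - 1) + j \<in> units" using ej(3) unit_plus_jac by blast
    moreover have "a = (1 - e) + ((2*e - 1) + j)" using ej(1) by (simp add: algebra_simps mult_2)
    moreover have "(1 - e) * ((2*e - 1) + j) = ((2*e - 1) + j) * (1 - e)"
    proof -
      have "j = a - e" using ej(1) by simp
      then show ?thesis using ej(4) ee by (simp add: algebra_simps mult_2 mult_2_right)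
    qed
    ultimately show "\<exists>f u. a = f + u \<and> projection st f \<and> u \<in> units \<and> f * u = u * f"
      using proj_compl[OF inv ej(2)] by blast
  qed
  have a2: "\<forall>a. a + st a \<in> jacobson"
  proof
    fix a
    obtain e j where ej: "a = e + j" "projection st e" "j \<in> jacobson" "a * e = e * a"
      using H'[of a] by blast
    have se: "st e = e" using ej(2) projection_def by blast
    have "a + st a = (e + e) + (j + st j)" using ej(1) se st_add[OF inv] by (simp add: algebra_simps)
    moreover have "(e + e) + (j + st j) \<in> jacobson"
      using two_mult_jac[OF two] ej(3) st_jac[OF inv] jac_add by blast
    ultimately show "a + st a \<in> jacobson" by simp
  qed
  have a3: "jacobson = {x. 1 + x * st x \<in> units}"
  proof (intro set_eqI iffI)
    fix x :: 'a assume "x \<in> jacobson"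
    then have "x * st x \<in> jacobson" by (rule jac_rmult)
    then have "1 - (-1) * (x * st x) \<in> units" by (rule jac_unit)
    then show "x \<in> {x. 1 + x * st x \<in> units}" by simp
  next
    fix x :: 'a assume "x \<in> {x. 1 + x * st x \<in> units}"
    then have u: "1 + x * st x \<in> units" by simp
    obtain e j where ej: "x = e + j" "projection st e" "j \<in> jacobson"
      using H'[of x] by blast
    have se: "st e = e" and ee: "e * e = e" using ej(2) projection_def by blast+
    define k where "k = e * st j + j * e + j * st j"
    have k: "k \<in> jacobson" unfolding k_def
      using ej(3) st_jac[OF inv] by (intro jac_add jac_lmult jac_rmult) auto
    have xs: "x * st x = e + k" unfolding k_def using ej(1) se ee st_add[OF inv]
      by (simp add: algebra_simps)
    have eq: "1 + e = (1 + x * st x) + (- k)" by (simp only: xs) (simp add: algebra_simps)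
    have "1 + e \<in> units" using unit_plus_jac[OF u jac_uminus[OF k]] eq by (simp only:)
    then obtain w where w: "w * (1 + e) = 1" unfolding units_def by blast
    have "e = w * ((1 + e) * e)" using w by (simp add: mult.assoc[symmetric])
    also have "\<dots> = w * (e + e)" using ee by (simp add: algebra_simps)
    finally have "e \<in> jacobson" using jac_lmult two_mult_jac[OF two] by metis
    then show "x \<in> jacobson" using ej jac_add by blast
  qed
  show "strongly_star_clean st \<and> (\<forall>a. a + st a \<in> jacobson) \<and> jacobson = {x. 1 + x * st x \<in> units}"
    using sc a2 a3 by blast
next
  assume "strongly_star_clean st \<and> (\<forall>a. a + st a \<in> jacobson) \<and> jacobson = {x. 1 + x * st x \<in> units}"
  then have sc: "strongly_star_clean st" and a2: "\<And>a. a + st a \<in> jacobson"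
    and a3: "jacobson = {x. 1 + x * st x \<in> units}" by blast+
  have two: "(2::'a) \<in> jacobson" using a2[of 1] st_1[OF inv] by (simp add: one_add_one)
  show "strongly_J_star_clean st" unfolding strongly_J_star_clean_def
  proof
    fix a
    obtain e u where eu: "a = e + u" "projection st e" "u \<in> units" "e * u = u * e"
      using sc unfolding strongly_star_clean_def by blast
    have ee: "e * e = e" using eu(2) projection_def by blast
    define x where "x = 1 + u"
    have "u * st u \<in> units" using eu(3) st_unit[OF inv] units_mult by blast
    moreover have "2 + (u + st u) \<in> jacobson" using two a2 jac_add by blast
    ultimately have "u * st u + (2 + (u + st u)) \<in> units" by (rule unit_plus_jac)
    moreover have "1 + x * st x = u * st u + (2 + (u + st u))"
      unfolding x_def using st_add[OF inv] st_1[OF inv]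
      by (simp add: algebra_simps)
    ultimately have "1 + x * st x \<in> units" by (simp only:)
    then have "x \<in> jacobson" by (simp add: a3)
    then have "x - 2 + (e + e) \<in> jacobson" using two two_mult_jac[OF two] jac_add jac_diff by blast
    moreover have "a = (1 - e) + (x - 2 + (e + e))" unfolding x_def using eu(1)
      by (simp add: algebra_simps)
    moreover have "a * (1 - e) = (1 - e) * a" using eu(1,4) ee by (simp add: algebra_simps)
    ultimately show "\<exists>f j. a = f + j \<and> projection st f \<and> j \<in> jacobson \<and> a * f = f * a"
      using proj_compl[OF inv eu(2)] by blast
  qed
qed

end
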